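(* Let $S$ be a finite symmetric generating set of $\mathbb{Z}$ and $(X_n)_{n\ge0}$ the lazy random walk on $\mathrm{Cay}(\mathbb{Z},S)$. Then there exists a constant $C>0$ such that for all $m\ge1$, $$\sup_{n\ge0}\mathbb{P}\big(X_n\in m\mathbb{Z}\setminus\{0\}\big)\le\frac{C}{\sqrt m}.$$ In particular, there exists $c>0$ such that for all $k\ge2$, $$\sup_{n\ge0}\mathbb{P}\big(X_n\in\Lambda_k(\mathbb{Z})\setminus\{0\}\big)\le e^{-ck}.$$
   Context: The lazy random walk on $\mathrm{Cay}(\mathbb{Z},S)$ starts at $X_0=0$ and at each step stays put with probability $1/2$ and otherwise adds a uniformly chosen element of $S$. $\Lambda_k(\mathbb{Z})$ denotes the intersection of all (normal) subgroups of $\mathbb{Z}$ of index at most $k$. *)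

theory Defs
  imports "HOL-Probability.Probability"
begin

definition int_subgroup :: "int set \<Rightarrow> bool" where
  "int_subgroup H \<longleftrightarrow> 0 \<in> H \<and> (\<forall>x\<in>H. \<forall>y\<in>H. x + y \<in> H) \<and> (\<forall>x\<in>H. - x \<in> H)"

definition int_cosets :: "int set \<Rightarrow> int set set" where
  "int_cosets H = (\<lambda>x. (\<lambda>h. x + h) ` H) ` UNIV"

definition int_generates :: "int set \<Rightarrow> bool" where
  "int_generates S \<longleftrightarrow> (\<forall>H. int_subgroup H \<and> S \<subseteq> H \<longrightarrow> H = UNIV)"

definition Lambda_int :: "nat \<Rightarrow> int set" where
  "Lambda_int k = \<Inter> {H. int_subgroup H \<and> finite (int_cosets H) \<and> card (int_cosets H) \<le> k}"

definition lazy_step :: "int set \<Rightarrow> int pmf" where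
  "lazy_step S = bind_pmf (bernoulli_pmf (1/2))
      (\<lambda>b. if b then return_pmf 0 else pmf_of_set S)"

fun lazy_walk :: "int set \<Rightarrow> nat \<Rightarrow> int pmf" where
  "lazy_walk S 0 = return_pmf 0"
| "lazy_walk S (Suc n) = bind_pmf (lazy_walk S n) (\<lambda>x. map_pmf (\<lambda>s. x + s) (lazy_step S))"

end

theory Submission
  imports Defs
begin



lemma prob_bind_pmf: "measure_pmf.prob (bind_pmf M f) A = (\<integral>x. measure_pmf.prob (f x) A \<partial>measure_pmf M)"
  unfolding measure_pmf_bind
  by (subst measure_pmf.measure_bind[where N="count_space UNIV"]) (auto simp: measurable_def space_subprob_algebra measure_pmf.subprob_space_axioms)

lemma pmf_lazy_step: "finite S \<Longrightarrow> S \<noteq> {} \<Longrightarrow> pmf (lazy_step S) x = (if x = 0 then 1/2 else 0) + (if x \<in> S then 1 / (2 * card S) else 0)"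
  unfolding lazy_step_def
  apply (subst pmf_bind)
  apply (subst integral_measure_pmf_real[where A=UNIV])
  apply (auto simp: UNIV_bool pmf_of_set)
  done

lemma set_pmf_lazy_step: assumes "finite S" "S \<noteq> {}" shows "set_pmf (lazy_step S) \<subseteq> insert 0 S"
proof
  fix x assume "x \<in> set_pmf (lazy_step S)"
  then show "x \<in> insert 0 S" using pmf_lazy_step[OF assms, of x] by (auto simp: set_pmf_iff split: if_splits)
qed

lemma integral_lazy_step:
  fixes g :: "int \<Rightarrow> real"
  assumes "finite S" "S \<noteq> {}"
  shows "(\<integral>s. g s \<partial>measure_pmf (lazy_step S)) = g 0 / 2 + (\<Sum>s\<in>S. g s) / (2 * card S)"
proof -
  have "(\<integral>s. g s \<partial>measure_pmf (lazy_step S)) = (\<Sum>a\<in>insert 0 S. g a * pmf (lazy_step S) a)"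
    using assms set_pmf_lazy_step[OF assms] by (intro integral_measure_pmf_real) auto
  also have "\<dots> = (\<Sum>a\<in>insert 0 S. g a * (if a = 0 then 1/2 else 0)) + (\<Sum>a\<in>insert 0 S. g a * (if a \<in> S then 1 / (2 * card S) else 0))"
    using assms by (simp add: pmf_lazy_step distrib_left sum.distrib)
  also have "(\<Sum>a\<in>insert 0 S. g a * (if a = 0 then 1/2 else 0)) = g 0 / 2"
    using assms by (simp add: if_distrib cong: if_cong)
  also have "(\<Sum>a\<in>insert 0 S. g a * (if a \<in> S then 1 / (2 * card S) else 0)) = (\<Sum>a\<in>S. g a * (1 / (2 * card S)))"
    using assms by (intro sum.mono_neutral_cong_right) auto
  also have "\<dots> = (\<Sum>s\<in>S. g s) / (2 * card S)"
    by (simp add: sum_divide_distrib)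
  finally show ?thesis .
qed

lemma lazy_walk_Suc': "lazy_walk S (Suc n) = bind_pmf (lazy_step S) (\<lambda>s. map_pmf (\<lambda>x. x + s) (lazy_walk S n))"
  by (simp add: map_pmf_def bind_return_pmf bind_commute_pmf[of "lazy_walk S n"] bind_assoc_pmf add.commute)





lemma sum_shift_int: "(\<Sum>x\<in>{a..b::int}. g (x + s)) = (\<Sum>x\<in>{a+s..b+s}. g x)"
proof -
  have "(\<lambda>x. x + s) ` {a..b} = {a+s..b+s}"
    by (auto simp: image_iff intro!: bexI[where x="_ - s"])
  show ?thesis
    by (rule sum.reindex_bij_witness[of _ "\<lambda>x. x - s" "\<lambda>x. x + s"]) auto
qed

lemma sum_superset_int:
  assumes "finite B" "{-R..R} \<subseteq> B" "\<And>x. \<bar>x\<bar> > R \<Longrightarrow> f x = 0"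
  shows "sum f B = (\<Sum>x\<in>{-R..(R::int)}. f x)"
  using assms by (intro sum.mono_neutral_right) auto

definition p :: "int set \<Rightarrow> nat \<Rightarrow> int \<Rightarrow> real" where "p S n x = pmf (lazy_walk S n) x"

context
  fixes S :: "int set" and M :: int
  assumes finS: "finite S" and neS: "S \<noteq> {}" and Mb: "\<And>s. s \<in> S \<Longrightarrow> \<bar>s\<bar> \<le> M" and M1: "M \<ge> 1"
begin


lemma p_Suc: "p S (Suc n) y = p S n y / 2 + (\<Sum>s\<in>S. p S n (y - s)) / (2 * card S)"
proof -
  have "p S (Suc n) y = (\<integral>s. pmf (map_pmf (\<lambda>x. x + s) (lazy_walk S n)) y \<partial>measure_pmf (lazy_step S))"
    unfolding p_def lazy_walk_Suc' pmf_bind ..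
  also have "\<dots> = (\<integral>s. p S n (y - s) \<partial>measure_pmf (lazy_step S))"
  proof -
    have "pmf (map_pmf (\<lambda>x. x + s) (lazy_walk S n)) y = p S n (y - s)" for s
      using pmf_map_inj'[of "\<lambda>x. x + s" "lazy_walk S n" "y - s"] by (simp add: p_def inj_on_def)
    then show ?thesis by simp
  qed
  also have "\<dots> = p S n y / 2 + (\<Sum>s\<in>S. p S n (y - s)) / (2 * card S)"
    by (subst integral_lazy_step[OF finS neS]) simp
  finally show ?thesis .
qed

lemma prob_Suc: "measure_pmf.prob (lazy_walk S (Suc n)) T =
   measure_pmf.prob (lazy_walk S n) T / 2 + (\<Sum>s\<in>S. measure_pmf.prob (lazy_walk S n) {x. x + s \<in> T}) / (2 * card S)"
  unfolding lazy_walk_Suc' prob_bind_pmf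
  by (subst integral_lazy_step[OF finS neS]) (simp add: vimage_def)

lemma support: "set_pmf (lazy_walk S n) \<subseteq> {x. \<bar>x\<bar> \<le> int n * M}"
proof (induction n)
  case 0 then show ?case by simp
next
  case (Suc n)
  have "x + s \<in> {x. \<bar>x\<bar> \<le> int (Suc n) * M}" if "x \<in> set_pmf (lazy_walk S n)" "s \<in> set_pmf (lazy_step S)" for x s
  proof -
    have "\<bar>s\<bar> \<le> M" using set_pmf_lazy_step[OF finS neS] that(2) Mb M1 by auto
    moreover have "\<bar>x\<bar> \<le> int n * M" using Suc that(1) by auto
    ultimately show ?thesis by (simp add: algebra_simps)
  qed
  then show ?case unfolding lazy_walk_Suc' set_bind_pmf set_map_pmf by blast
qed

lemma p_zero: "\<bar>x\<bar> > int n * M \<Longrightarrow> p S n x = 0"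
  using support[of n] by (auto simp: p_def set_pmf_iff)

lemma p_nonneg: "p S n x \<ge> 0" by (simp add: p_def)
lemma p_le1: "p S n x \<le> 1" by (simp add: p_def pmf_le_1)

lemma p_sum1: assumes "R \<ge> int n * M" shows "(\<Sum>x\<in>{-R..R}. p S n x) = 1"
  unfolding p_def using support[of n] assms by (intro sum_pmf_eq_1) (auto simp: subset_iff abs_le_iff)

lemma prob_window: "measure_pmf.prob (lazy_walk S n) T = (\<Sum>x\<in>T \<inter> {-(int n*M)..int n*M}. p S n x)"
proof -
  have "measure_pmf.prob (lazy_walk S n) T = measure_pmf.prob (lazy_walk S n) (T \<inter> {-(int n*M)..int n*M})"
    using support[of n] by (intro measure_prob_cong_0) (auto simp: set_pmf_iff)
  then show ?thesis by (simp add: measure_measure_pmf_finite p_def)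
qed

end



context
  fixes S :: "int set" and M :: int and s0 :: int
  assumes finS: "finite S" and neS: "S \<noteq> {}" and Mb: "\<And>s. s \<in> S \<Longrightarrow> \<bar>s\<bar> \<le> M" and M1: "M \<ge> 1"
    and s0pos: "s0 > 0" and s0M: "s0 \<le> M" and s0S: "- s0 \<in> S"
begin

abbreviation P where "P \<equiv> p S"

definition W :: "nat \<Rightarrow> int set" where "W n = {-(int n*M)..int n*M}"
definition E :: "nat \<Rightarrow> real" where "E n = (\<Sum>x\<in>W n. (P n x)^2)"
definition D :: "nat \<Rightarrow> real" where "D n = (\<Sum>x\<in>W (Suc n). (P n x - P n (x + s0))^2)"

lemma P_zero: "\<bar>x\<bar> > int n * M \<Longrightarrow> P n x = 0"
  using p_zero[OF finS neS Mb M1] by blast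

lemma sq_shift: assumes "\<bar>t\<bar> \<le> M" shows "(\<Sum>x\<in>W (Suc n). (P n (x + t))^2) = E n"
proof -
  have "(\<Sum>x\<in>W (Suc n). (P n (x + t))^2) = (\<Sum>x\<in>{-(int n*M+M)+t..(int n*M+M)+t}. (P n x)^2)"
  proof -
    have "W (Suc n) = {-(int n*M+M)..int n*M+M}" by (simp add: W_def algebra_simps)
    then show ?thesis using sum_shift_int[where g="\<lambda>y. (P n y)^2" and s=t] by simp
  qed
  also have "\<dots> = (\<Sum>x\<in>{-(int n*M)..int n*M}. (P n x)^2)"
    using assms by (intro sum_superset_int) (auto simp: P_zero)
  finally show ?thesis by (simp add: E_def W_def)
qed

lemma sq_shift0: "(\<Sum>x\<in>W (Suc n). (P n x)^2) = E n"
  using sq_shift[of 0 n] M1 by simp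

lemma card_pos: "real (card S) > 0" using finS neS by (simp add: card_gt_0_iff)

lemma cs_one: "(\<Sum>s\<in>S. a s)^2 \<le> real (card S) * (\<Sum>s\<in>S. (a s)^2)"
  using Cauchy_Schwarz_ineq_sum[of a "\<lambda>_. 1" S] by (simp add: mult.commute)

lemma cross_term: assumes "s \<in> S"
  shows "(\<Sum>x\<in>W (Suc n). P n x * P n (x - s)) = E n - (\<Sum>x\<in>W (Suc n). (P n x - P n (x - s))^2) / 2"
proof -
  have "(\<Sum>x\<in>W (Suc n). (P n x - P n (x - s))^2) = (\<Sum>x\<in>W (Suc n). (P n x)^2) + (\<Sum>x\<in>W (Suc n). (P n (x + (-s)))^2) - 2 * (\<Sum>x\<in>W (Suc n). P n x * P n (x - s))"
    by (simp add: power2_diff sum.distrib sum_subtractf sum_distrib_left mult.assoc)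
  also have "\<dots> = 2 * E n - 2 * (\<Sum>x\<in>W (Suc n). P n x * P n (x - s))"
    using sq_shift0 sq_shift[of "-s" n] Mb[OF assms] by simp
  finally show ?thesis by (simp add: field_simps)
qed

lemma energy_step: "E (Suc n) \<le> E n - D n / (4 * card S)"
proof -
  define \<sigma> where "\<sigma> = real (card S)"
  have sp: "\<sigma> > 0" using card_pos by (simp add: \<sigma>_def)
  define V where "V = W (Suc n)"
  define f where "f = P n"
  define A where "A x = (\<Sum>s\<in>S. f (x - s))" for x
  have pS: "P (Suc n) x = f x / 2 + A x / (2 * \<sigma>)" for x
    unfolding f_def A_def \<sigma>_def using p_Suc[OF finS neS Mb M1] by simp
  have "E (Suc n) = (\<Sum>x\<in>V. (f x / 2 + A x / (2 * \<sigma>))^2)"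
    by (simp add: E_def V_def pS)
  also have "\<dots> \<le> (\<Sum>x\<in>V. (f x)^2 / 4 + f x * A x / (2 * \<sigma>) + (\<Sum>s\<in>S. (f (x - s))^2) / (4 * \<sigma>))"
  proof (rule sum_mono)
    fix x
    have "(A x)^2 \<le> \<sigma> * (\<Sum>s\<in>S. (f (x - s))^2)" unfolding A_def \<sigma>_def by (rule cs_one)
    then have "(A x)^2 / (4 * \<sigma>^2) \<le> (\<Sum>s\<in>S. (f (x - s))^2) / (4 * \<sigma>)"
      using sp by (simp add: field_simps power2_eq_square)
    moreover have "(f x / 2 + A x / (2 * \<sigma>))^2 = (f x)^2 / 4 + f x * A x / (2 * \<sigma>) + (A x)^2 / (4 * \<sigma>^2)"
      using sp by (simp add: field_simps power2_eq_square)
    ultimately show "(f x / 2 + A x / (2 * \<sigma>))^2 \<le> (f x)^2 / 4 + f x * A x / (2 * \<sigma>) + (\<Sum>s\<in>S. (f (x - s))^2) / (4 * \<sigma>)"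
      by linarith
  qed
  also have "\<dots> = (\<Sum>x\<in>V. (f x)^2) / 4 + (\<Sum>s\<in>S. \<Sum>x\<in>V. f x * f (x - s)) / (2 * \<sigma>) + (\<Sum>s\<in>S. \<Sum>x\<in>V. (f (x - s))^2) / (4 * \<sigma>)"
    by (simp add: sum.distrib A_def sum_distrib_left sum_divide_distrib[symmetric] sum.swap[of _ V S])
  finally have main: "E (Suc n) \<le> (\<Sum>x\<in>V. (f x)^2) / 4 + (\<Sum>s\<in>S. \<Sum>x\<in>V. f x * f (x - s)) / (2 * \<sigma>) + (\<Sum>s\<in>S. \<Sum>x\<in>V. (f (x - s))^2) / (4 * \<sigma>)" .
  have h1: "(\<Sum>x\<in>V. (f x)^2) = E n" using sq_shift0 by (simp add: V_def f_def)
  have h2: "(\<Sum>s\<in>S. \<Sum>x\<in>V. (f (x - s))^2) = \<sigma> * E n"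
    using sq_shift[of "-_" n] Mb by (simp add: V_def f_def \<sigma>_def)
  define T where "T = (\<Sum>s\<in>S. (\<Sum>x\<in>V. (f x - f (x - s))^2))"
  have "(\<Sum>s\<in>S. \<Sum>x\<in>V. f x * f (x - s)) = (\<Sum>s\<in>S. E n - (\<Sum>x\<in>V. (f x - f (x - s))^2) / 2)"
    using cross_term by (intro sum.cong) (auto simp: V_def f_def)
  also have "\<dots> = \<sigma> * E n - T / 2"
    by (simp add: sum_subtractf sum_divide_distrib \<sigma>_def T_def)
  finally have h3: "(\<Sum>s\<in>S. \<Sum>x\<in>V. f x * f (x - s)) = \<sigma> * E n - T / 2" .
  have h4: "T \<ge> D n"
  proof -
    have "D n = (\<Sum>x\<in>V. (f x - f (x - (-s0)))^2)" by (simp add: D_def V_def f_def)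
    also have "\<dots> \<le> T" unfolding T_def
      by (rule member_le_sum[OF s0S]) (auto intro: sum_nonneg finS)
    finally show ?thesis .
  qed
  have "E n / 4 + (\<sigma> * E n - T / 2) / (2 * \<sigma>) + \<sigma> * E n / (4 * \<sigma>) = E n - T / (4 * \<sigma>)"
    using sp by (simp add: field_simps)
  moreover have "T / (4 * \<sigma>) \<ge> D n / (4 * \<sigma>)" using h4 sp by (simp add: divide_right_mono)
  ultimately show ?thesis using main h1 h2 h3 by (simp add: \<sigma>_def)
qed

lemma nash_tele: "(P n x)^2 \<le> (\<Sum>z\<in>{x..int n * M}. \<bar>(P n z)^2 - (P n (z + s0))^2\<bar>)"
proof (induction "nat (int n * M + 1 - x)" arbitrary: x rule: less_induct)
  case less
  show ?case
  proof (cases "x > int n * M")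
    case True
    then have "\<bar>x\<bar> > int n * M" by linarith
    then show ?thesis using P_zero by simp
  next
    case False
    define g where "g z = \<bar>(P n z)^2 - (P n (z + s0))^2\<bar>" for z
    have "(P n (x + s0))^2 \<le> (\<Sum>z\<in>{x + s0..int n * M}. g z)"
      unfolding g_def using False s0pos by (intro less) auto
    also have "\<dots> \<le> (\<Sum>z\<in>{x<..int n * M}. g z)"
      using s0pos by (intro sum_mono2) (auto simp: g_def)
    finally have "(P n x)^2 \<le> g x + (\<Sum>z\<in>{x<..int n * M}. g z)"
      unfolding g_def by linarith
    also have "\<dots> = (\<Sum>z\<in>{x..int n * M}. g z)"
    proof -
      have "{x..int n * M} = insert x {x<..int n * M}" using False by auto
      then show ?thesis by simp
    qed
    finally show ?thesis by (simp add: g_def)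
  qed
qed

lemma E_nonneg: "E n \<ge> 0" unfolding E_def by (simp add: sum_nonneg)
lemma D_nonneg: "D n \<ge> 0" unfolding D_def by (simp add: sum_nonneg)

lemma nash: "(P n x)^4 \<le> 4 * D n * E n"
proof (cases "\<bar>x\<bar> > int n * M")
  case True
  then show ?thesis using P_zero E_nonneg D_nonneg by simp
next
  case False
  define V where "V = W (Suc n)"
  define a where "a z = P n z - P n (z + s0)" for z
  define b where "b z = P n z + P n (z + s0)" for z
  have "(P n x)^2 \<le> (\<Sum>z\<in>{x..int n * M}. \<bar>(P n z)^2 - (P n (z + s0))^2\<bar>)" by (rule nash_tele)
  also have "\<dots> \<le> (\<Sum>z\<in>V. \<bar>(P n z)^2 - (P n (z + s0))^2\<bar>)"
    using False M1 by (intro sum_mono2) (auto simp: V_def W_def algebra_simps)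
  also have "\<dots> = (\<Sum>z\<in>V. \<bar>a z\<bar> * \<bar>b z\<bar>)"
    by (intro sum.cong) (auto simp: a_def b_def abs_mult[symmetric] power2_eq_square algebra_simps)
  finally have h: "(P n x)^2 \<le> (\<Sum>z\<in>V. \<bar>a z\<bar> * \<bar>b z\<bar>)" .
  have "((P n x)^2)^2 \<le> (\<Sum>z\<in>V. \<bar>a z\<bar> * \<bar>b z\<bar>)^2"
    using h by (intro power_mono) auto
  also have "\<dots> \<le> (\<Sum>z\<in>V. \<bar>a z\<bar>^2) * (\<Sum>z\<in>V. \<bar>b z\<bar>^2)"
    by (rule Cauchy_Schwarz_ineq_sum)
  also have "(\<Sum>z\<in>V. \<bar>a z\<bar>^2) = D n" by (simp add: D_def V_def a_def)
  also have "(\<Sum>z\<in>V. \<bar>b z\<bar>^2) \<le> (\<Sum>z\<in>V. 2 * (P n z)^2 + 2 * (P n (z + s0))^2)"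
  proof (intro sum_mono)
    fix z
    have "0 \<le> (P n z - P n (z + s0))^2" by simp
    then show "\<bar>b z\<bar>^2 \<le> 2 * (P n z)^2 + 2 * (P n (z + s0))^2"
      by (simp add: b_def power2_eq_square algebra_simps)
  qed
  also have "\<dots> = 4 * E n"
    using sq_shift0[of n] sq_shift[of s0 n] s0pos s0M by (simp add: sum.distrib sum_distrib_left[symmetric] V_def)
  finally show ?thesis using D_nonneg[of n]
    by (simp add: power_mult[symmetric] mult_left_mono mult.assoc)
qed

lemma P_nonneg: "P n x \<ge> 0" using p_nonneg[OF finS neS Mb M1] by blast
lemma P_le1: "P n x \<le> 1" using p_le1[OF finS neS Mb M1] by blast
lemma P_sum1: "(\<Sum>x\<in>W n. P n x) = 1" unfolding W_def using p_sum1[OF finS neS Mb M1, of n "int n * M"] by simp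

lemma E_pos: "E n > 0"
proof -
  have "\<exists>x\<in>W n. P n x \<noteq> 0"
  proof (rule ccontr)
    assume "\<not> ?thesis"
    then have "(\<Sum>x\<in>W n. P n x) = 0" by simp
    then show False using P_sum1 by simp
  qed
  then obtain x where x: "x \<in> W n" "P n x \<noteq> 0" by blast
  have "0 < (P n x)^2" using x by simp
  also have "\<dots> \<le> E n" unfolding E_def by (rule member_le_sum) (use x(1) in \<open>auto simp: W_def\<close>)
  finally show ?thesis .
qed

lemma E_le1: "E n \<le> 1"
proof -
  have "E n \<le> (\<Sum>x\<in>W n. P n x)" unfolding E_def
    by (intro sum_mono) (simp add: power2_eq_square mult_left_le P_nonneg P_le1)
  then show ?thesis using P_sum1 by simp
qed

lemma E_cube: "E n ^ 3 \<le> 4 * D n"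
proof -
  define t where "t = sqrt (sqrt (4 * D n * E n))"
  have nn: "0 \<le> 4 * D n * E n" using D_nonneg[of n] E_nonneg[of n] by simp
  have t2: "t ^ 2 = sqrt (4 * D n * E n)" unfolding t_def by (rule real_sqrt_pow2) (simp add: nn)
  have t4: "t ^ 4 = 4 * D n * E n"
  proof -
    have "t ^ 4 = (t ^ 2) ^ 2" using power_mult[of t 2 2] by simp
    also have "\<dots> = 4 * D n * E n" unfolding t2 by (rule real_sqrt_pow2[OF nn])
    finally show ?thesis .
  qed
  have t0: "t \<ge> 0" using nn by (simp add: t_def)
  have Pt: "P n x \<le> t" for x
  proof -
    have "(P n x)^4 \<le> t^4" using nash[of n x] unfolding t4 .
    then show ?thesis using power_mono_iff[OF P_nonneg t0, of 4] by simp
  qed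
  have "E n \<le> (\<Sum>x\<in>W n. P n x * t)" unfolding E_def
    by (intro sum_mono) (simp add: power2_eq_square mult_left_mono P_nonneg Pt)
  also have "\<dots> = t" using P_sum1[of n] by (simp only: sum_distrib_right[symmetric])
  finally have "E n \<le> t" .
  then have "E n ^ 4 \<le> t ^ 4" using E_nonneg[of n] by (intro power_mono) auto
  moreover have "E n ^ 4 = E n ^ 3 * E n" by (simp add: eval_nat_numeral)
  ultimately have "E n ^ 3 * E n \<le> 4 * D n * E n" using t4 by simp
  then show ?thesis using E_pos[of n] by simp
qed


definition cst :: real where "cst = 1 / (16 * card S)"

lemma cst_pos: "cst > 0" using card_pos by (simp add: cst_def)
lemma cst_le: "cst \<le> 1 / 16" using card_pos by (simp add: cst_def field_simps)

lemma E_rec: "E (Suc n) \<le> E n - cst * E n ^ 3"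
proof -
  have "cst * E n ^ 3 \<le> D n / (4 * card S)"
    using E_cube[of n] card_pos by (simp add: cst_def field_simps)
  then show ?thesis using energy_step[of n] by linarith
qed

lemma E_decay: "E n ^ 2 * (1 + 2 * cst * n) \<le> 1"
proof (induction n)
  case 0 then show ?case using E_le1[of 0] E_nonneg[of 0] by (simp add: power_le_one)
next
  case (Suc n)
  define e where "e = E n"
  define e' where "e' = E (Suc n)"
  define x where "x = cst * e^2"
  have e0: "e > 0" and e1: "e \<le> 1" using E_pos E_le1 by (auto simp: e_def)
  have x0: "x \<ge> 0" and x1: "x \<le> 1" using cst_pos cst_le e0 e1
    by (auto simp: x_def power_le_one intro!: mult_le_one)
  have e'0: "e' > 0" using E_pos by (simp add: e'_def)
  have "e' \<le> e * (1 - x)" using E_rec[of n] by (simp add: e_def e'_def x_def power3_eq_cube power2_eq_square algebra_simps)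
  then have "e'^2 \<le> (e * (1 - x))^2" using e'0 by (intro power_mono) auto
  then have a: "e'^2 \<le> e^2 * (1 - x)^2" by (simp add: power_mult_distrib)
  have ih: "e^2 * (1 + 2 * cst * n) \<le> 1" using Suc by (simp add: e_def)
  have "e'^2 * (1 + 2 * cst * Suc n) \<le> e^2 * (1 - x)^2 * (1 + 2 * cst * Suc n)"
    using a cst_pos by (intro mult_right_mono) auto
  also have "\<dots> = (1 - x)^2 * (e^2 * (1 + 2 * cst * n)) + (1 - x)^2 * (2 * x)"
    by (simp add: x_def algebra_simps)
  also have "\<dots> \<le> (1 - x)^2 * 1 + (1 - x)^2 * (2 * x)"
    using ih by (intro add_right_mono mult_left_mono) auto
  also have "\<dots> = 1 - x^2 * (3 - 2 * x)" by (simp add: power2_eq_square algebra_simps)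
  also have "\<dots> \<le> 1" using x0 x1 by simp
  finally show ?case by (simp add: e'_def)
qed

lemma E_mono: "n \<le> m \<Longrightarrow> E m \<le> E n"
proof (induction m rule: dec_induct)
  case (step m)
  have "D m / (4 * card S) \<ge> 0" using D_nonneg[of m] card_pos by simp
  then show ?case using energy_step[of m] step by linarith
qed simp

lemma D_tele: "(\<Sum>a\<in>{A..<A+k}. D a) \<le> 4 * card S * (E A - E (A + k))"
proof (induction k)
  case (Suc k)
  have "D (A + k) \<le> 4 * card S * (E (A + k) - E (A + Suc k))"
    using energy_step[of "A + k"] card_pos by (simp add: field_simps)
  then show ?case using Suc by (simp add: algebra_simps)
qed simp

lemma pigeon: assumes "A \<ge> 1" shows "\<exists>a. A \<le> a \<and> a < 2 * A \<and> D a \<le> 4 * card S * E A / A"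
proof (rule ccontr)
  assume "\<not> ?thesis"
  then have lt: "\<And>a. a \<in> {A..<A+A} \<Longrightarrow> 4 * card S * E A / A < D a" by (metis atLeastLessThan_iff mult_2 not_le)
  have "(\<Sum>a\<in>{A..<A+A}. 4 * card S * E A / A) < (\<Sum>a\<in>{A..<A+A}. D a)"
    using assms by (intro sum_strict_mono lt) auto
  also have "\<dots> \<le> 4 * card S * (E A - E (A + A))" by (rule D_tele)
  also have "\<dots> \<le> 4 * card S * E A" using E_pos[of "A+A"] by (intro mult_left_mono) auto
  finally show False using assms by simp
qed

lemma point_bound: assumes "A \<ge> 1"
  shows "\<exists>a. A \<le> a \<and> a < 2 * A \<and> (\<forall>x. (P a x)^4 \<le> 128 * (card S)^2 / (real A)^2)"
proof -
  obtain a where a: "A \<le> a" "a < 2 * A" "D a \<le> 4 * card S * E A / A" using pigeon[OF assms] by blast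
  have Ea: "E a \<le> E A" using E_mono a by blast
  have dec: "E A ^ 2 * (1 + 2 * cst * A) \<le> 1" by (rule E_decay)
  have "E A ^ 2 * (2 * cst * A) \<le> E A ^ 2 * (1 + 2 * cst * A)" by (intro mult_left_mono) auto
  then have "E A ^ 2 * (2 * cst * A) \<le> 1" using dec by linarith
  then have EA2: "E A ^ 2 \<le> 8 * card S / A" using cst_pos assms
    by (simp add: cst_def field_simps)
  {
    fix x
    have "(P a x)^4 \<le> 4 * D a * E a" by (rule nash)
    also have "\<dots> \<le> 4 * (4 * card S * E A / A) * E A"
      using a(3) Ea D_nonneg E_nonneg by (intro mult_mono) auto
    also have "\<dots> = 16 * card S * E A ^ 2 / A" by (simp add: power2_eq_square)
    also have "\<dots> \<le> 16 * card S * (8 * card S / A) / A"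
      using EA2 assms by (intro divide_right_mono mult_left_mono) auto
    also have "\<dots> = 128 * (card S)^2 / (real A)^2" by (simp add: power2_eq_square)
    finally have "(P a x)^4 \<le> 128 * (card S)^2 / (real A)^2" .
  }
  then show ?thesis using a by blast
qed

end



context
  fixes S :: "int set" and M :: int
  assumes finS: "finite S" and neS: "S \<noteq> {}" and Mb: "\<And>s. s \<in> S \<Longrightarrow> \<bar>s\<bar> \<le> M" and M1: "M \<ge> 1"
begin

lemma coset_prop:
  assumes "\<And>y. measure_pmf.prob (lazy_walk S a) {x. L dvd x - y} \<le> G"
  shows "measure_pmf.prob (lazy_walk S (a + k)) {x. L dvd x - y} \<le> G"
proof (induction k arbitrary: y)
  case 0 then show ?case using assms by simp
next
  case (Suc k)
  have cs: "real (card S) > 0" using finS neS by (simp add: card_gt_0_iff)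
  have pre: "{x. x + s \<in> {x. L dvd x - y}} = {x. L dvd x - (y - s)}" for s
    by (simp add: algebra_simps)
  have "(\<Sum>s\<in>S. measure_pmf.prob (lazy_walk S (a + k)) {x. x + s \<in> {x. L dvd x - y}}) \<le> (\<Sum>s\<in>S. G)"
    unfolding pre by (intro sum_mono Suc)
  then have "(\<Sum>s\<in>S. measure_pmf.prob (lazy_walk S (a + k)) {x. x + s \<in> {x. L dvd x - y}}) / (2 * card S) \<le> card S * G / (2 * card S)"
    using cs by (intro divide_right_mono) auto
  also have "\<dots> = G / 2" using cs by simp
  finally show ?case
    using prob_Suc[OF finS neS Mb M1, of "a + k" "{x. L dvd x - y}"] Suc[of y] by simp
qed

lemma coset_small:
  assumes "2 * int a * M < L" and B: "\<And>x. p S a x \<le> B" and "B \<ge> 0"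
  shows "measure_pmf.prob (lazy_walk S a) {x. L dvd x - y} \<le> B"
proof -
  define A where "A = {x. L dvd x - y} \<inter> {-(int a*M)..int a*M}"
  have fin: "finite A" by (simp add: A_def)
  have uniq: "u = v" if "u \<in> A" "v \<in> A" for u v
  proof (rule ccontr)
    assume "u \<noteq> v"
    have u: "L dvd u - y" "\<bar>u\<bar> \<le> int a * M" and v: "L dvd v - y" "\<bar>v\<bar> \<le> int a * M"
      using that unfolding A_def by auto
    have "L dvd (u - y) - (v - y)" using u(1) v(1) by (rule dvd_diff)
    then have "L dvd u - v" by simp
    then have "\<bar>L\<bar> \<le> \<bar>u - v\<bar>" using \<open>u \<noteq> v\<close> by (intro dvd_imp_le_int) auto
    then show False using u v assms(1) by linarith
  qed
  have "measure_pmf.prob (lazy_walk S a) {x. L dvd x - y} = (\<Sum>x\<in>A. p S a x)"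
    unfolding A_def by (rule prob_window[OF finS neS Mb M1])
  also have "\<dots> \<le> B"
  proof (cases "A = {}")
    case True then show ?thesis using assms by simp
  next
    case False
    then obtain u where "u \<in> A" by blast
    then have "A = {u}" using uniq by blast
    then show ?thesis using B by simp
  qed
  finally show ?thesis .
qed

end



context
  fixes S :: "int set" and M :: int
  assumes finS: "finite S" and neS: "S \<noteq> {}" and Mb: "\<And>s. s \<in> S \<Longrightarrow> \<bar>s\<bar> \<le> M" and M1: "M \<ge> 1"
begin

lemma small_zero:
  assumes "int n * M < int m"
  shows "measure_pmf.prob (lazy_walk S n) {x. int m dvd x \<and> x \<noteq> 0} = 0"
proof -
  have "{x. int m dvd x \<and> x \<noteq> 0} \<inter> {-(int n*M)..int n*M} = {}"
  proof (rule ccontr)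
    assume "\<not> ?thesis"
    then obtain x where x0: "x \<in> {x. int m dvd x \<and> x \<noteq> 0} \<inter> {-(int n*M)..int n*M}" by blast
    then have x: "int m dvd x" "x \<noteq> 0" "\<bar>x\<bar> \<le> int n * M" by auto
    then have "\<bar>int m\<bar> \<le> \<bar>x\<bar>" by (intro dvd_imp_le_int) auto
    then show False using x assms by linarith
  qed
  then show ?thesis using prob_window[OF finS neS Mb M1, of n] by simp
qed

lemma claim1:
  assumes s0pos: "s0 > 0" and s0M: "s0 \<le> M" and s0S: "- s0 \<in> S" and m1: "m \<ge> 1"
  shows "measure_pmf.prob (lazy_walk S n) {x. int m dvd x \<and> x \<noteq> 0} \<le> 10 * sqrt (card S * M) / sqrt m"
proof -
  have cs: "real (card S) \<ge> 1" using finS neS by (simp add: Suc_leI card_gt_0_iff)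
  define B where "B = 10 * sqrt (card S * M) / sqrt m"
  have B0: "B \<ge> 0" using M1 by (simp add: B_def)
  show ?thesis
  proof (cases "int m < 8 * M")
    case True
    have "sqrt m \<le> sqrt (8 * M)" using True by simp
    also have "\<dots> \<le> 10 * sqrt (card S * M)"
    proof -
      have "sqrt (8 * M) \<le> sqrt (100 * (card S * M))" using cs M1
        by (intro real_sqrt_le_mono) (simp add: mult_left_mono)
      also have "\<dots> = 10 * sqrt (card S * M)" by (simp add: real_sqrt_mult)
      finally show ?thesis .
    qed
    finally have "1 \<le> B" using m1 by (simp add: B_def field_simps)
    moreover have "measure_pmf.prob (lazy_walk S n) {x. int m dvd x \<and> x \<noteq> 0} \<le> 1" by (rule measure_pmf.prob_le_1)
    ultimately show ?thesis unfolding B_def by linarith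
  next
    case False
    define A where "A = nat (int m div (4 * M))"
    have Aint: "int A = int m div (4 * M)" using M1 by (simp add: A_def pos_imp_zdiv_nonneg_iff)
    have dm: "int m = 4 * M * (int m div (4 * M)) + int m mod (4 * M)" by simp
    have md0: "0 \<le> int m mod (4 * M)" using M1 by simp
    have md1: "int m mod (4 * M) < 4 * M" using M1 by simp
    have A4: "4 * M * int A \<le> int m" unfolding Aint using dm md0 by linarith
    have A5: "int m < 4 * M * (int A + 1)" unfolding Aint using dm md1 by (simp add: algebra_simps)
    have A1: "A \<ge> 1"
    proof (rule ccontr)
      assume "\<not> A \<ge> 1"
      then have "A = 0" by simp
      then show False using A5 False by simp
    qed
    have Areal: "real A \<ge> real m / (8 * M)"
    proof -
      have "real_of_int (int m) < real_of_int (4 * M * (int A + 1))" using A5 by (simp only: of_int_less_iff)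
      then have r1: "real m < 4 * M * A + 4 * M" by (simp add: algebra_simps)
      have r2: "real m \<ge> 8 * M" using False by linarith
      have r3: "real_of_int M \<le> M * A" using A1 M1 by (simp add: mult_le_cancel_left1)
      have "real m \<le> 8 * M * A" using r1 r2 r3 by linarith
      then show ?thesis using M1 by (simp add: field_simps)
    qed
    obtain a where a: "A \<le> a" "a < 2 * A" "\<And>x. (p S a x)^4 \<le> 128 * (card S)^2 / (real A)^2"
      using point_bound[OF finS neS Mb M1 s0pos s0M s0S A1] by blast
    have pb: "p S a x \<le> B" for x
    proof -
      have "(p S a x)^4 \<le> 128 * (card S)^2 / (real A)^2" by (rule a(3))
      also have "\<dots> \<le> 128 * (card S)^2 / (real m / (8 * M))^2"
        using Areal m1 M1 A1 by (intro divide_left_mono power_mono mult_pos_pos) auto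
      also have "\<dots> = 8192 * (card S)^2 * M^2 / (real m)^2"
        using M1 by (simp add: field_simps power2_eq_square)
      also have "\<dots> \<le> 10000 * (card S)^2 * M^2 / (real m)^2"
        by (intro divide_right_mono mult_right_mono) auto
      also have "\<dots> = B^4"
      proof -
        have B2: "B^2 = 100 * (card S * M) / m"
          using M1 by (simp add: B_def power_divide power_mult_distrib real_sqrt_pow2)
        have "B^4 = (B^2)^2" using power_mult[of B 2 2] by simp
        then show ?thesis unfolding B2 by (simp add: power_divide power_mult_distrib)
      qed
      finally show ?thesis using power_mono_iff[OF p_nonneg[OF finS neS Mb M1] B0, of 4] by simp
    qed
    have aM: "2 * int a * M < int m"
    proof -
      have "2 * int a * M \<le> 2 * (2 * int A - 1) * M" using a(2) M1 by (intro mult_right_mono) auto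
      then show ?thesis using A4 M1 by (simp add: algebra_simps)
    qed
    show ?thesis
    proof (cases "n < a")
      case True
      have "int n * M \<le> int a * M" using True M1 by (intro mult_right_mono) auto
      moreover have "0 \<le> int a * M" using M1 by simp
      ultimately have "int n * M < int m" using aM by linarith
      then show ?thesis using small_zero B0 unfolding B_def by simp
    next
      case False
      define k where "k = n - a"
      have n: "n = a + k" using False by (simp add: k_def)
      have "measure_pmf.prob (lazy_walk S n) {x. int m dvd x \<and> x \<noteq> 0} \<le> measure_pmf.prob (lazy_walk S n) {x. int m dvd x - 0}"
        by (intro measure_pmf.finite_measure_mono) auto
      also have "\<dots> \<le> B"
      proof -
        have cs: "\<And>y. measure_pmf.prob (lazy_walk S a) {x. int m dvd x - y} \<le> B"
          by (rule coset_small[OF finS neS Mb M1 aM pb B0])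
        show ?thesis unfolding n by (rule coset_prop[OF finS neS Mb M1 cs])
      qed
      finally show ?thesis by (simp add: B_def)
    qed
  qed
qed

end



lemma binom_dvd_Lcm: "k \<le> n \<Longrightarrow> (n + 1) * (n choose k) dvd Lcm {1..n+1::nat}"
proof (induction k arbitrary: n)
  case 0
  then show ?case by (simp add: dvd_Lcm)
next
  case (Suc k)
  then obtain n' where n: "n = Suc n'" and kn: "k \<le> n'" by (cases n) auto
  define C where "C = n' choose k"
  define P where "P = Suc n' choose k"
  define Q where "Q = Suc n' choose Suc k"
  define a where "a = (n' + 1) * C"
  define b where "b = (n' + 2) * P"
  define c where "c = (n' + 2) * Q"
  define \<Lambda> where "\<Lambda> = Lcm {1..n'+2::nat}"
  have sub: "Lcm {1..n'+1::nat} dvd \<Lambda>" unfolding \<Lambda>_def by (intro Lcm_subset) auto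
  have ha: "a dvd \<Lambda>" using Suc.IH[OF kn] sub unfolding a_def C_def by (metis dvd_trans)
  have hb: "b dvd \<Lambda>" using Suc.IH[of "Suc n'"] kn unfolding b_def P_def \<Lambda>_def by simp
  have r1: "(Suc n' - k) * P = Suc n' * C" unfolding P_def C_def
    using binomial_absorb_comp[of "Suc n'" k] by simp
  have r2: "Suc k * Q = Suc n' * C" unfolding Q_def C_def
    using Suc_times_binomial[of k n'] by simp
  have bpos: "b > a"
  proof -
    have "b = (n' + 2) * P" by (simp add: b_def)
    have "a = (Suc n' - k) * P" using r1 by (simp add: a_def)
    moreover have "P > 0" using kn by (simp add: P_def)
    moreover have "(Suc n' - k) * P < (n' + 2) * P" using \<open>P > 0\<close> by (intro mult_strict_right_mono) auto
    ultimately show ?thesis by (simp add: b_def)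
  qed
  have key: "a * b = c * (b - a)"
  proof -
    have aa: "a = (Suc n' - k) * P" using r1 by (simp add: a_def)
    have "b - a = ((n' + 2) - (Suc n' - k)) * P" unfolding aa b_def by (rule diff_mult_distrib[symmetric])
    also have "(n' + 2) - (Suc n' - k) = Suc k" using kn by simp
    finally have "b - a = Suc k * P" .
    then have "c * (b - a) = (n' + 2) * P * (Suc k * Q)" by (simp add: c_def algebra_simps)
    also have "\<dots> = (n' + 2) * P * (Suc n' * C)" by (simp only: r2)
    also have "\<dots> = a * b" by (simp add: a_def b_def algebra_simps)
    finally show ?thesis by simp
  qed
  obtain u where u: "\<Lambda> = a * u" using ha by blast
  obtain v where v: "\<Lambda> = b * v" using hb by blast
  have k': "int a * int b = int c * (int b - int a)"
  proof -
    have "int (a * b) = int (c * (b - a))" using key by simp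
    then show ?thesis using bpos by (simp add: of_nat_diff)
  qed
  have e1: "int a * int b * int u = int b * int \<Lambda>" using u by (simp flip: of_nat_mult)
  have e2: "int a * int b * int v = int a * int \<Lambda>" using v by (simp flip: of_nat_mult)
  have "(int c * (int u - int v) - int \<Lambda>) * (int b - int a) = 0"
    using e1 e2 k' by (simp add: algebra_simps)
  moreover have "int b - int a \<noteq> 0" using bpos by simp
  ultimately have "int c * (int u - int v) = int \<Lambda>" by simp
  then have "int c dvd int \<Lambda>" by (metis dvd_triv_left)
  then have "c dvd \<Lambda>" by (simp add: int_dvd_int_iff)
  then show ?case by (simp add: n c_def Q_def \<Lambda>_def)
qed

lemma Lcm_lower: "2 ^ n \<le> Lcm {1..n+1::nat}"
proof -
  have "\<exists>k\<le>n. 2 ^ n \<le> (n + 1) * (n choose k)"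
  proof (rule ccontr)
    assume "\<not> ?thesis"
    then have "\<And>k. k \<in> {..n} \<Longrightarrow> (n + 1) * (n choose k) < 2 ^ n" by auto
    then have "(\<Sum>k\<in>{..n}. (n + 1) * (n choose k)) < (\<Sum>k\<in>{..n}. 2 ^ n)"
      by (intro sum_strict_mono) auto
    also have "(\<Sum>k\<in>{..n}. (n + 1) * (n choose k)) = (n + 1) * 2 ^ n"
      by (simp only: sum_distrib_left[symmetric] choose_row_sum)
    finally show False by simp
  qed
  then obtain k where k: "k \<le> n" "2 ^ n \<le> (n + 1) * (n choose k)" by blast
  have nz: "Lcm {1..n+1::nat} \<noteq> 0" by (auto simp: Lcm_0_iff)
  have "(n + 1) * (n choose k) \<le> Lcm {1..n+1}"
    by (rule dvd_imp_le[OF binom_dvd_Lcm[OF k(1)]]) (use nz in \<open>simp only: gr0I\<close>)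
  then show ?thesis using k(2) by linarith
qed




lemma coset_mult: "(\<lambda>h. x + h) ` {y. int j dvd y} = {z. int j dvd z - x}"
proof safe
  fix z assume "int j dvd z - x"
  then show "z \<in> (\<lambda>h. x + h) ` {y. int j dvd y}" by (intro image_eqI[where x="z - x"]) auto
qed auto

lemma mult_subgroup:
  assumes "j \<ge> 1"
  shows "int_subgroup {y. int j dvd y} \<and> finite (int_cosets {y. int j dvd y}) \<and> card (int_cosets {y. int j dvd y}) \<le> j"
proof -
  have eq: "int_cosets {y. int j dvd y} = (\<lambda>x. {z. int j dvd z - x}) ` {0..<int j}"
  proof -
    have ceq: "{z. int j dvd z - x} = {z. int j dvd z - x mod int j}" for x
    proof -
      have d: "int j dvd x - x mod int j" by (simp add: minus_mod_eq_mult_div)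
      have "int j dvd z - x \<longleftrightarrow> int j dvd z - x mod int j" for z
      proof -
        have "z - x mod int j = (x - x mod int j) + (z - x)" by simp
        then show ?thesis using dvd_add_right_iff[OF d, of "z - x"] by simp
      qed
      then show ?thesis by simp
    qed
    show ?thesis unfolding int_cosets_def coset_mult
    proof (rule equalityI)
      show "range (\<lambda>x. {z. int j dvd z - x}) \<subseteq> (\<lambda>x. {z. int j dvd z - x}) ` {0..<int j}"
      proof
        fix A assume "A \<in> range (\<lambda>x. {z. int j dvd z - x})"
        then obtain x where "A = {z. int j dvd z - x}" by blast
        then have "A = {z. int j dvd z - x mod int j}" using ceq by simp
        moreover have "x mod int j \<in> {0..<int j}" using assms by simp
        ultimately show "A \<in> (\<lambda>x. {z. int j dvd z - x}) ` {0..<int j}" by blast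
      qed
    qed auto
  qed
  have "int_subgroup {y. int j dvd y}" unfolding int_subgroup_def by auto
  moreover have "finite (int_cosets {y. int j dvd y})" unfolding eq by simp
  moreover have "card (int_cosets {y. int j dvd y}) \<le> j" unfolding eq
    using card_image_le[of "{0..<int j}" "\<lambda>x. {z. int j dvd z - x}"] by simp
  ultimately show ?thesis by blast
qed

lemma Lambda_dvd:
  assumes "x \<in> Lambda_int k"
  shows "int (Lcm {1..k}) dvd x"
proof -
  have "j dvd nat \<bar>x\<bar>" if j: "j \<in> {1..k}" for j
  proof -
    have "{y. int j dvd y} \<in> {H. int_subgroup H \<and> finite (int_cosets H) \<and> card (int_cosets H) \<le> k}"
      using mult_subgroup[of j] j by auto
    then have "int j dvd x" using assms unfolding Lambda_int_def by blast
    then show ?thesis by (metis dvd_abs_iff int_dvd_int_iff abs_ge_zero int_nat_eq)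
  qed
  then have "Lcm {1..k} dvd nat \<bar>x\<bar>" by (intro Lcm_least) auto
  then show ?thesis by (metis dvd_abs_iff int_dvd_int_iff abs_ge_zero int_nat_eq)
qed




lemma compl_bound: "z \<notin> A \<Longrightarrow> measure_pmf.prob M A \<le> 1 - pmf M z"
proof -
  assume z: "z \<notin> A"
  have "measure_pmf.prob M (A \<union> {z}) = measure_pmf.prob M A + measure_pmf.prob M {z}"
    using z by (intro measure_pmf.finite_measure_Union) auto
  moreover have "measure_pmf.prob M (A \<union> {z}) \<le> 1" by (rule measure_pmf.prob_le_1)
  ultimately show ?thesis by (simp add: measure_pmf_single)
qed

context
  fixes S :: "int set" and M :: int
  assumes finS: "finite S" and neS: "S \<noteq> {}" and Mb: "\<And>s. s \<in> S \<Longrightarrow> \<bar>s\<bar> \<le> M" and M1: "M \<ge> 1"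
begin

lemma parity:
  assumes so: "so \<in> S" "odd so"
  shows "measure_pmf.prob (lazy_walk S n) {x. 2 dvd x \<and> x \<noteq> 0} \<le> 1 - 1 / (2 * card S)"
proof -
  have cs: "real (card S) \<ge> 1" using finS neS by (simp add: Suc_leI card_gt_0_iff)
  define G where "G = 1 - 1 / (2 * real (card S))"
  have G12: "1/2 \<le> G" using cs by (simp add: G_def field_simps)
  have p0: "p S 0 x = (if x = 0 then 1 else 0)" for x unfolding p_def by (simp add: indicator_def)
  have p1: "p S 1 x = p S 0 x / 2 + (\<Sum>s\<in>S. p S 0 (x - s)) / (2 * card S)" for x
    using p_Suc[OF finS neS Mb M1, of 0 x] by simp
  have base: "measure_pmf.prob (lazy_walk S 1) {x. 2 dvd x - y} \<le> G" for y
  proof (cases "even y")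
    case True
    have "so \<notin> {x. 2 dvd x - y}" using True so(2) by auto
    then have "measure_pmf.prob (lazy_walk S 1) {x. 2 dvd x - y} \<le> 1 - p S 1 so"
      unfolding p_def by (rule compl_bound)
    moreover have "p S 1 so \<ge> 1 / (2 * card S)"
    proof -
      have "p S 0 (so - so) \<le> (\<Sum>s\<in>S. p S 0 (so - s))"
        by (rule member_le_sum[OF so(1)]) (auto simp: p0 finS)
      then have "1 \<le> (\<Sum>s\<in>S. p S 0 (so - s))" by (simp add: p0)
      then have "1 / (2 * card S) \<le> (\<Sum>s\<in>S. p S 0 (so - s)) / (2 * card S)"
        using cs by (intro divide_right_mono) auto
      moreover have "p S 0 so / 2 \<ge> 0" by (simp add: p0)
      ultimately show ?thesis using p1[of so] by linarith
    qed
    ultimately show ?thesis by (simp add: G_def)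
  next
    case False
    have "0 \<notin> {x. 2 dvd x - y}" using False by auto
    then have "measure_pmf.prob (lazy_walk S 1) {x. 2 dvd x - y} \<le> 1 - p S 1 0"
      unfolding p_def by (rule compl_bound)
    moreover have "p S 1 0 \<ge> 1 / 2"
    proof -
      have "(\<Sum>s\<in>S. p S 0 (0 - s)) \<ge> 0" by (intro sum_nonneg) (simp add: p0)
      then have "(\<Sum>s\<in>S. p S 0 (0 - s)) / (2 * card S) \<ge> 0" by simp
      then show ?thesis using p1[of 0] by (simp add: p0)
    qed
    ultimately show ?thesis using G12 by linarith
  qed
  show ?thesis
  proof (cases n)
    case 0
    have "measure_pmf.prob (lazy_walk S n) {x. 2 dvd x \<and> x \<noteq> 0} = 0" using 0 by simp
    then show ?thesis using G12 by (simp add: G_def)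
  next
    case (Suc k)
    have n1: "n = 1 + k" using Suc by simp
    have "measure_pmf.prob (lazy_walk S n) {x. 2 dvd x \<and> x \<noteq> 0} \<le> measure_pmf.prob (lazy_walk S (1 + k)) {x. 2 dvd x - 0}"
      unfolding n1 by (intro measure_pmf.finite_measure_mono) auto
    also have "\<dots> \<le> G" by (rule coset_prop[OF finS neS Mb M1 base])
    finally show ?thesis by (simp add: G_def)
  qed
qed

end



lemma sqrt_exp: "sqrt (exp y) = exp (y / 2)"
proof (rule real_sqrt_unique)
  show "(exp (y / 2))^2 = exp y" by (simp add: power2_eq_square flip: exp_add)
qed simp

lemma pow2_exp: "(2::real) ^ j = exp (real j * ln 2)"
  by (simp add: exp_of_nat_mult)

theorem lemma4p4:
  fixes S :: "int set"
  assumes "finite S" and "uminus ` S = S" and "int_generates S"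
  shows "(\<exists>C>0. \<forall>m::nat. m \<ge> 1 \<longrightarrow> (\<forall>n.
            measure_pmf.prob (lazy_walk S n) {x. int m dvd x \<and> x \<noteq> 0} \<le> C / sqrt (real m)))
       \<and> (\<exists>c>0. \<forall>k::nat. k \<ge> 2 \<longrightarrow> (\<forall>n.
            measure_pmf.prob (lazy_walk S n) (Lambda_int k - {0}) \<le> exp (- c * real k)))"
proof -
  note finS = assms(1)
  have sub0: "int_subgroup {0}" by (simp add: int_subgroup_def)
  have sub2: "int_subgroup {x::int. even x}" by (auto simp: int_subgroup_def)
  obtain s1 where s1: "s1 \<in> S" "s1 \<noteq> 0"
  proof -
    have "\<not> S \<subseteq> {0}"
    proof
      assume "S \<subseteq> {0}"
      then have "{0::int} = UNIV" using assms(3) sub0 unfolding int_generates_def by blast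
      then show False by (metis UNIV_I singletonD zero_neq_one)
    qed
    then show ?thesis using that by blast
  qed
  obtain so where so: "so \<in> S" "odd so"
  proof -
    have "\<not> S \<subseteq> {x. even x}"
    proof
      assume "S \<subseteq> {x. even x}"
      then have "{x::int. even x} = UNIV" using assms(3) sub2 unfolding int_generates_def by blast
      then show False by (metis UNIV_I mem_Collect_eq odd_one)
    qed
    then show ?thesis using that by blast
  qed
  have neS: "S \<noteq> {}" using s1 by blast
  define M where "M = max 1 (Max (abs ` S))"
  have Mb: "\<And>s. s \<in> S \<Longrightarrow> \<bar>s\<bar> \<le> M"
  proof -
    fix s assume "s \<in> S"
    then have "\<bar>s\<bar> \<le> Max (abs ` S)" using finS by (intro Max_ge) auto
    then show "\<bar>s\<bar> \<le> M" by (simp add: M_def)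
  qed
  have M1: "M \<ge> 1" by (simp add: M_def)
  define s0 where "s0 = \<bar>s1\<bar>"
  have s0pos: "s0 > 0" using s1 by (simp add: s0_def)
  have s0M: "s0 \<le> M" using Mb[OF s1(1)] by (simp add: s0_def)
  have s0S: "- s0 \<in> S"
  proof (cases "s1 > 0")
    case True
    have "s1 \<in> uminus ` S" using assms(2) s1 by simp
    then have "- s1 \<in> S" by auto
    then show ?thesis using True by (simp add: s0_def)
  next
    case False
    then show ?thesis using s1 by (simp add: s0_def)
  qed
  have cs: "real (card S) \<ge> 1" using finS neS by (simp add: Suc_leI card_gt_0_iff)
  define C where "C = 10 * sqrt (real (card S) * real_of_int M)"
  have Cpos: "C > 0" using cs M1 by (simp add: C_def)
  have part1: "\<And>m n. m \<ge> 1 \<Longrightarrow> measure_pmf.prob (lazy_walk S n) {x. int m dvd x \<and> x \<noteq> 0} \<le> C / sqrt (real m)"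
  proof -
    fix m n :: nat assume m: "m \<ge> 1"
    have "measure_pmf.prob (lazy_walk S n) {x. int m dvd x \<and> x \<noteq> 0} \<le> 10 * sqrt (real_of_int (int (card S) * M)) / sqrt (real m)"
      using claim1[of S M s0 m n, OF finS neS Mb M1 s0pos s0M s0S] m by simp
    then show "measure_pmf.prob (lazy_walk S n) {x. int m dvd x \<and> x \<noteq> 0} \<le> C / sqrt (real m)"
      by (simp add: C_def)
  qed
  define \<theta> where "\<theta> = 1 / (2 * real (card S))"
  have \<theta>pos: "\<theta> > 0" using cs by (simp add: \<theta>_def)
  define a :: real where "a = ln 2 / 2"
  have apos: "a > 0" by (simp add: a_def)
  define C' where "C' = C * exp a + 2"
  have C'1: "C' > 1" using Cpos by (simp add: C'_def add_pos_pos)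
  define K0 where "K0 = 2 * ln C' / a + 1"
  have K0pos: "K0 > 0" using C'1 apos by (simp add: K0_def add_pos_pos)
  define c where "c = min (a / 2) (\<theta> / K0)"
  have cpos: "c > 0" using apos \<theta>pos K0pos by (simp add: c_def)
  have part2: "measure_pmf.prob (lazy_walk S n) (Lambda_int k - {0}) \<le> exp (- c * real k)"
    if k2: "k \<ge> 2" for k n
  proof -
    define L where "L = Lcm {1..k}"
    have sub: "Lambda_int k - {0} \<subseteq> {x. int L dvd x \<and> x \<noteq> 0}"
      using Lambda_dvd unfolding L_def by blast
    have L2: "2 dvd L" unfolding L_def using k2 by (intro dvd_Lcm) auto
    have sub2: "{x. int L dvd x \<and> x \<noteq> 0} \<subseteq> {x. 2 dvd x \<and> x \<noteq> 0}"
      using L2 by (auto intro: dvd_trans[of 2 "int L"] simp: int_dvd_int_iff[of 2 L, simplified])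
    have Llow: "2 ^ (k - 1) \<le> L" using Lcm_lower[of "k - 1"] k2 by (simp add: L_def)
    have L1: "L \<ge> 1" using Llow by (metis one_le_numeral one_le_power order_trans)
    have b1: "measure_pmf.prob (lazy_walk S n) (Lambda_int k - {0}) \<le> C / sqrt (real L)"
      using measure_pmf.finite_measure_mono[OF sub, of "lazy_walk S n"] part1[OF L1, of n] by simp
    have b2: "measure_pmf.prob (lazy_walk S n) (Lambda_int k - {0}) \<le> 1 - \<theta>"
      using measure_pmf.finite_measure_mono[OF order_trans[OF sub sub2], of "lazy_walk S n"] parity[OF finS neS Mb M1 so, of n]
      by (simp add: \<theta>_def)
    show ?thesis
    proof (cases "real k \<ge> K0")
      case True
      have "sqrt (real L) \<ge> sqrt (real (2 ^ (k - 1)))" using Llow by simp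
      also have "sqrt (real (2 ^ (k - 1))) = exp (a * (real k - 1))"
      proof -
        have "sqrt (real (2 ^ (k - 1))) = sqrt (exp (real (k - 1) * ln 2))" by (simp add: pow2_exp)
        also have "\<dots> = exp (real (k - 1) * ln 2 / 2)" by (rule sqrt_exp)
        also have "\<dots> = exp (a * (real k - 1))" using k2 by (simp add: a_def of_nat_diff algebra_simps)
        finally show ?thesis .
      qed
      finally have sq: "sqrt (real L) \<ge> exp (a * (real k - 1))" .
      have "C / sqrt (real L) \<le> C / exp (a * (real k - 1))"
        using sq Cpos L1 by (intro divide_left_mono) (auto intro!: mult_pos_pos)
      also have "\<dots> = C * exp a * exp (- a * real k)"
        by (simp add: exp_diff exp_minus algebra_simps field_simps flip: exp_add)
      also have "\<dots> \<le> C' * exp (- a * real k)"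
        by (intro mult_right_mono) (auto simp: C'_def)
      also have "\<dots> = exp (ln C' - a * real k)" using C'1 by (simp add: exp_diff exp_minus field_simps)
      also have "\<dots> \<le> exp (- c * real k)"
      proof -
        have "ln C' \<le> a * real k / 2"
        proof -
          have "2 * ln C' / a \<le> real k" using True by (simp add: K0_def)
          then show ?thesis using apos by (simp add: field_simps)
        qed
        moreover have "c \<le> a / 2" unfolding c_def by (rule min.cobounded1)
        then have "c * real k \<le> a / 2 * real k" by (intro mult_right_mono) auto
        ultimately show ?thesis by simp
      qed
      finally show ?thesis using b1 by linarith
    next
      case False
      have "c \<le> \<theta> / K0" unfolding c_def by (rule min.cobounded2)
      then have "c * real k \<le> \<theta> / K0 * real k" by (intro mult_right_mono) auto
      also have "\<dots> \<le> \<theta>" using False K0pos \<theta>pos by (simp add: field_simps)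
      finally have "- \<theta> \<le> - c * real k" by simp
      then have "exp (- \<theta>) \<le> exp (- c * real k)" by simp
      moreover have "1 - \<theta> \<le> exp (- \<theta>)" using exp_ge_add_one_self[of "- \<theta>"] by simp
      ultimately show ?thesis using b2 by linarith
    qed
  qed
  show ?thesis using Cpos part1 cpos part2 by blast
qed



end
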